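(* For binary strings with reach $r=1$, \[ \sum_{n\ge0}\mathbf{EL}_{n,2,1}\,a^n=\frac{a(a^2-2a+8)}{2(a^2-4a+8)(a-1)^2}, \] and consequently \[ \mathbf{EL}_{n,2,1}=\frac{7}{10}n-\frac{7}{25}+O\!\left(2^{-3n/2}\right)\quad(n\to\infty); \] in particular $\gamma_{2,1}=\lim_{n\to\infty}\mathbf{EL}_{n,2,1}/n=\frac{7}{10}$.
   Context: For strings $u=u_1\cdots u_n$, $v=v_1\cdots v_n\in\{0,1\}^n$ and an integer $r\ge1$, let $\mathbf{L}_r(u,v)$ be the largest $m$ such that there exist indices $1\le i_1<\dots<i_m\le n$ and $1\le j_1<\dots<j_m\le n$ with $u_{i_a}=v_{j_a}$ and $|i_a-j_a|\le r$ for all $a$. Define $\mathbf{EL}_{n,2,r}=2^{-2n}\sum_{u,v\in\{0,1\}^n}\mathbf{L}_r(u,v)$, with $\mathbf{EL}_{0,2,r}=0$. *)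

theory Defs
  imports "HOL-Analysis.Analysis" "HOL-Library.Landau_Symbols"
begin

text \<open>Binary strings are bool lists; positions are 0-based. A common subsequence with
  reach r of length m is given by strictly increasing index maps i, j on {0..<m}.\<close>

definition common_reach :: "nat \<Rightarrow> bool list \<Rightarrow> bool list \<Rightarrow> nat \<Rightarrow> bool" where
  "common_reach r u v m \<longleftrightarrow>
     (\<exists>i j :: nat \<Rightarrow> nat.
        (\<forall>a<m. i a < length u \<and> j a < length v \<and> u ! (i a) = v ! (j a)
               \<and> \<bar>int (i a) - int (j a)\<bar> \<le> int r)
      \<and> (\<forall>a b. a < b \<and> b < m \<longrightarrow> i a < i b \<and> j a < j b))"

definition LCS_reach :: "nat \<Rightarrow> bool list \<Rightarrow> bool list \<Rightarrow> nat" where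
  "LCS_reach r u v = Max {m. common_reach r u v m}"

definition EL2 :: "nat \<Rightarrow> nat \<Rightarrow> real" where
  "EL2 n r = (\<Sum>u\<in>{xs :: bool list. length xs = n}. \<Sum>v\<in>{xs :: bool list. length xs = n}.
                 real (LCS_reach r u v)) / 2 ^ (2 * n)"

end

theory Submission
  imports Defs
begin


fun FF :: "bool list \<Rightarrow> bool list \<Rightarrow> nat \<Rightarrow> nat \<Rightarrow> nat" where
  "FF u v 0 j = 0"
| "FF u v (Suc i) 0 = 0"
| "FF u v (Suc i) (Suc j) = max (max (FF u v i (Suc j)) (FF u v (Suc i) j))
      (FF u v i j + (if u!i = v!j \<and> i \<le> Suc j \<and> j \<le> Suc i then 1 else 0))"

lemma cr_prefix:
  assumes "common_reach r (take i u) (take j v) m" "i \<le> i'" "j \<le> j'"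
  shows "common_reach r (take i' u) (take j' v) m"
proof -
  from assms(1) obtain I J where
    h1: "\<forall>a<m. I a < length (take i u) \<and> J a < length (take j v) \<and> take i u ! (I a) = take j v ! (J a)
               \<and> \<bar>int (I a) - int (J a)\<bar> \<le> int r"
    and h2: "\<forall>a b. a < b \<and> b < m \<longrightarrow> I a < I b \<and> J a < J b"
    unfolding common_reach_def by blast
  have "\<forall>a<m. I a < length (take i' u) \<and> J a < length (take j' v) \<and> take i' u ! (I a) = take j' v ! (J a)
               \<and> \<bar>int (I a) - int (J a)\<bar> \<le> int r"
  proof (intro allI impI)
    fix a assume "a < m"
    with h1 have "I a < length (take i u)" "J a < length (take j v)"
      "take i u ! (I a) = take j v ! (J a)" "\<bar>int (I a) - int (J a)\<bar> \<le> int r" by auto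
    then show "I a < length (take i' u) \<and> J a < length (take j' v) \<and> take i' u ! (I a) = take j' v ! (J a)
               \<and> \<bar>int (I a) - int (J a)\<bar> \<le> int r"
      using assms(2,3) by auto
  qed
  with h2 show ?thesis unfolding common_reach_def by blast
qed

lemma cr_extend:
  assumes "common_reach r (take i u) (take j v) m" "i < length u" "j < length v"
    "u!i = v!j" "\<bar>int i - int j\<bar> \<le> int r"
  shows "common_reach r (take (Suc i) u) (take (Suc j) v) (Suc m)"
proof -
  from assms(1) obtain I J where
    h1: "\<forall>a<m. I a < length (take i u) \<and> J a < length (take j v) \<and> take i u ! (I a) = take j v ! (J a)
               \<and> \<bar>int (I a) - int (J a)\<bar> \<le> int r"
    and h2: "\<forall>a b. a < b \<and> b < m \<longrightarrow> I a < I b \<and> J a < J b"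
    unfolding common_reach_def by blast
  define I' where "I' = I(m := i)"
  define J' where "J' = J(m := j)"
  have "\<forall>a<Suc m. I' a < length (take (Suc i) u) \<and> J' a < length (take (Suc j) v)
       \<and> take (Suc i) u ! (I' a) = take (Suc j) v ! (J' a)
               \<and> \<bar>int (I' a) - int (J' a)\<bar> \<le> int r"
  proof (intro allI impI)
    fix a assume a: "a < Suc m"
    show "I' a < length (take (Suc i) u) \<and> J' a < length (take (Suc j) v)
       \<and> take (Suc i) u ! (I' a) = take (Suc j) v ! (J' a)
               \<and> \<bar>int (I' a) - int (J' a)\<bar> \<le> int r"
    proof (cases "a = m")
      case True then show ?thesis using assms by (simp add: I'_def J'_def)
    next
      case False
      with a have "a < m" by simp
      with h1 have "I a < length (take i u)" "J a < length (take j v)"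
        "take i u ! (I a) = take j v ! (J a)" "\<bar>int (I a) - int (J a)\<bar> \<le> int r" by auto
      then show ?thesis using False by (simp add: I'_def J'_def)
    qed
  qed
  moreover have "\<forall>a b. a < b \<and> b < Suc m \<longrightarrow> I' a < I' b \<and> J' a < J' b"
  proof (intro allI impI)
    fix a b assume ab: "a < b \<and> b < Suc m"
    show "I' a < I' b \<and> J' a < J' b"
    proof (cases "b = m")
      case True
      with ab have "a < m" by simp
      with h1 have "I a < length (take i u)" "J a < length (take j v)" by auto
      then show ?thesis using True ab by (simp add: I'_def J'_def)
    next
      case False
      then show ?thesis using ab h2 by (simp add: I'_def J'_def)
    qed
  qed
  ultimately show ?thesis unfolding common_reach_def by blast
qed

lemma cr_split:
  assumes "common_reach r (take (Suc i) u) (take (Suc j) v) (Suc m)" "i < length u" "j < length v"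
  shows "common_reach r (take i u) (take (Suc j) v) (Suc m) \<or> common_reach r (take (Suc i) u) (take j v) (Suc m)
     \<or> (common_reach r (take i u) (take j v) m \<and> u!i = v!j \<and> \<bar>int i - int j\<bar> \<le> int r)"
proof -
  from assms(1) obtain I J where
    h1: "\<forall>a<Suc m. I a < length (take (Suc i) u) \<and> J a < length (take (Suc j) v) \<and> take (Suc i) u ! (I a) = take (Suc j) v ! (J a)
               \<and> \<bar>int (I a) - int (J a)\<bar> \<le> int r"
    and h2: "\<forall>a b. a < b \<and> b < Suc m \<longrightarrow> I a < I b \<and> J a < J b"
    unfolding common_reach_def by blast
  have le: "I a \<le> I m \<and> J a \<le> J m" if "a < Suc m" for a
    using h2[rule_format, of a m] that by (cases "a = m") (auto simp: less_Suc_eq)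
  have Im: "I m \<le> i" "J m \<le> j" using h1 assms(2,3) by auto
  show ?thesis
  proof (cases "I m < i")
    case True
    have "\<forall>a<Suc m. I a < length (take i u) \<and> J a < length (take (Suc j) v) \<and> take i u ! (I a) = take (Suc j) v ! (J a)
               \<and> \<bar>int (I a) - int (J a)\<bar> \<le> int r"
    proof (intro allI impI)
      fix a assume a: "a < Suc m"
      from le[OF a] True have "I a < i" by simp
      with h1 a assms(2) show "I a < length (take i u) \<and> J a < length (take (Suc j) v) \<and> take i u ! (I a) = take (Suc j) v ! (J a)
               \<and> \<bar>int (I a) - int (J a)\<bar> \<le> int r" by auto
    qed
    with h2 have "common_reach r (take i u) (take (Suc j) v) (Suc m)" unfolding common_reach_def by blast
    then show ?thesis by blast
  next
    case F1: False
    show ?thesis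
    proof (cases "J m < j")
      case True
      have "\<forall>a<Suc m. I a < length (take (Suc i) u) \<and> J a < length (take j v) \<and> take (Suc i) u ! (I a) = take j v ! (J a)
                 \<and> \<bar>int (I a) - int (J a)\<bar> \<le> int r"
      proof (intro allI impI)
        fix a assume a: "a < Suc m"
        from le[OF a] True have "J a < j" by simp
        with h1 a assms(3) show "I a < length (take (Suc i) u) \<and> J a < length (take j v) \<and> take (Suc i) u ! (I a) = take j v ! (J a)
                 \<and> \<bar>int (I a) - int (J a)\<bar> \<le> int r" by auto
      qed
      with h2 have "common_reach r (take (Suc i) u) (take j v) (Suc m)" unfolding common_reach_def by blast
      then show ?thesis by blast
    next
      case False
      with F1 Im have eq: "I m = i" "J m = j" by auto
      have "\<forall>a<m. I a < length (take i u) \<and> J a < length (take j v) \<and> take i u ! (I a) = take j v ! (J a)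
                 \<and> \<bar>int (I a) - int (J a)\<bar> \<le> int r"
      proof (intro allI impI)
        fix a assume a: "a < m"
        from h2 a eq have "I a < i" "J a < j" by auto
        moreover have "a < Suc m" using a by simp
        ultimately show "I a < length (take i u) \<and> J a < length (take j v) \<and> take i u ! (I a) = take j v ! (J a)
                 \<and> \<bar>int (I a) - int (J a)\<bar> \<le> int r" using h1[rule_format, of a] assms(2,3) by simp
      qed
      moreover have "\<forall>a b. a < b \<and> b < m \<longrightarrow> I a < I b \<and> J a < J b" using h2 by auto
      ultimately have "common_reach r (take i u) (take j v) m" unfolding common_reach_def by blast
      moreover have "u!i = v!j" "\<bar>int i - int j\<bar> \<le> int r" using h1 eq assms(2,3)
        by (auto dest: spec[of _ m])
      ultimately show ?thesis by blast
    qed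
  qed
qed

lemma cr_Nil1: "common_reach r [] v m \<longleftrightarrow> m = 0"
  unfolding common_reach_def by auto

lemma cr_Nil2: "common_reach r u [] m \<longleftrightarrow> m = 0"
  unfolding common_reach_def by auto

lemma cr_FF: "i \<le> length u \<Longrightarrow> j \<le> length v \<Longrightarrow>
   common_reach 1 (take i u) (take j v) m \<longleftrightarrow> m \<le> FF u v i j"
proof (induction u v i j arbitrary: m rule: FF.induct)
  case (1 u v j) then show ?case by (simp add: cr_Nil1)
next
  case (2 u v i) then show ?case by (simp add: cr_Nil2)
next
  case (3 u v i j)
  have ij: "i < length u" "j < length v" using "3.prems" by auto
  have reach: "(\<bar>int i - int j\<bar> \<le> int 1) = (i \<le> Suc j \<and> j \<le> Suc i)" by auto
  show ?case
  proof
    assume cr: "common_reach 1 (take (Suc i) u) (take (Suc j) v) m"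
    show "m \<le> FF u v (Suc i) (Suc j)"
    proof (cases m)
      case 0 then show ?thesis by simp
    next
      case (Suc m')
      from cr_split[OF cr[unfolded Suc] ij] show ?thesis
      proof (elim disjE conjE)
        assume "common_reach 1 (take i u) (take (Suc j) v) (Suc m')"
        with "3.IH"(1)[of "Suc m'"] "3.prems" Suc show ?thesis by auto
      next
        assume "common_reach 1 (take (Suc i) u) (take j v) (Suc m')"
        with "3.IH"(2)[of "Suc m'"] "3.prems" Suc show ?thesis by auto
      next
        assume "common_reach 1 (take i u) (take j v) m'" "u!i = v!j" "\<bar>int i - int j\<bar> \<le> int 1"
        with "3.IH"(3)[of "m'"] "3.prems" Suc reach show ?thesis by auto
      qed
    qed
  next
    assume m: "m \<le> FF u v (Suc i) (Suc j)"
    show "common_reach 1 (take (Suc i) u) (take (Suc j) v) m"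
    proof (cases "m \<le> FF u v i (Suc j)")
      case True
      with "3.IH"(1)[of m] "3.prems" have "common_reach 1 (take i u) (take (Suc j) v) m" by auto
      then show ?thesis by (rule cr_prefix) auto
    next
      case F1: False
      show ?thesis
      proof (cases "m \<le> FF u v (Suc i) j")
        case True
        with "3.IH"(2)[of m] "3.prems" have "common_reach 1 (take (Suc i) u) (take j v) m" by auto
        then show ?thesis by (rule cr_prefix) auto
      next
        case F2: False
        show ?thesis
        proof (cases "m \<le> FF u v i j")
          case True
          with "3.IH"(3)[of m] "3.prems" have "common_reach 1 (take i u) (take j v) m" by auto
          then show ?thesis by (rule cr_prefix) auto
        next
          case False
          with m F1 F2 have b: "u!i = v!j \<and> i \<le> Suc j \<and> j \<le> Suc i" and mm: "m = Suc (FF u v i j)"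
            by (auto split: if_splits)
          from "3.IH"(3)[of "FF u v i j"] "3.prems" have "common_reach 1 (take i u) (take j v) (FF u v i j)" by auto
          from cr_extend[OF this ij] b reach mm show ?thesis by auto
        qed
      qed
    qed
  qed
qed

lemma LCS_FF: "length u = n \<Longrightarrow> length v = n \<Longrightarrow> LCS_reach 1 u v = FF u v n n"
proof -
  assume "length u = n" "length v = n"
  then have "{m. common_reach 1 u v m} = {m. m \<le> FF u v n n}"
    using cr_FF[of n u n v] by auto
  then show ?thesis unfolding LCS_reach_def by (auto intro: Max_eqI)
qed



lemmas FF3 = FF.simps(3)
declare FF.simps(3)[simp del]

lemma FF_0: "FF u v i 0 = 0" by (cases i) auto

lemma FF_mono1: "FF u v i j \<le> FF u v (Suc i) j"
  by (cases j) (auto simp: FF_0 FF3)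

lemma FF_mono2: "FF u v i j \<le> FF u v i (Suc j)"
  by (cases i) (auto simp: FF3)

lemma FF_lip2: "FF u v i (Suc j) \<le> FF u v i j + 1"
proof (induction i arbitrary: j)
  case 0 then show ?case by simp
next
  case (Suc i)
  have c2: "FF u v i (Suc j) \<le> FF u v (Suc i) j + 1"
    using Suc.IH[of j] FF_mono1[of u v i j] by linarith
  have c3: "FF u v i j + (if c then 1 else 0) \<le> FF u v (Suc i) j + 1" for c
    using FF_mono1[of u v i j] by (cases c) simp_all
  show ?case
    by (subst FF3[of u v i j], intro max.boundedI) (use c2 c3 in simp_all)
qed

lemma FF_lip1: "FF u v (Suc i) j \<le> FF u v i j + 1"
proof (induction j arbitrary: i)
  case 0 then show ?case by (simp add: FF_0)
next
  case (Suc j)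
  have c2: "FF u v (Suc i) j \<le> FF u v i (Suc j) + 1"
    using Suc.IH[of i] FF_mono2[of u v i j] by linarith
  have c3: "FF u v i j + (if c then 1 else 0) \<le> FF u v i (Suc j) + 1" for c
    using FF_mono2[of u v i j] by (cases c) simp_all
  show ?case
    by (subst FF3[of u v i j], intro max.boundedI) (use c2 c3 in simp_all)
qed

lemma FF_band1: "Suc i \<le> j \<Longrightarrow> FF u v i j = FF u v i (Suc i)"
proof (induction u v i j rule: FF.induct)
  case (1 u v j) then show ?case by simp
next
  case (2 u v i) then show ?case by simp
next
  case (3 u v i j)
  show ?case
  proof (cases "j = Suc i")
    case True then show ?thesis by simp
  next
    case False
    with "3.prems" have j: "Suc (Suc i) \<le> j" by simp
    have e1: "FF u v i (Suc j) = FF u v i (Suc i)" using "3.IH"(1) j by simp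
    have e2: "FF u v (Suc i) j = FF u v (Suc i) (Suc (Suc i))" using "3.IH"(2) j by simp
    have e3: "FF u v i j = FF u v i (Suc i)" using "3.IH"(3) j by simp
    have m: "FF u v i (Suc i) \<le> FF u v (Suc i) (Suc (Suc i))"
      using FF_mono1[of u v i "Suc i"] FF_mono2[of u v "Suc i" "Suc i"] by linarith
    show ?thesis using e1 e2 e3 m j by (simp add: FF3[of u v i j])
  qed
qed

lemma FF_band2: "Suc j \<le> i \<Longrightarrow> FF u v i j = FF u v (Suc j) j"
proof (induction u v i j rule: FF.induct)
  case (1 u v j) then show ?case by simp
next
  case (2 u v i) then show ?case by (simp add: FF_0)
next
  case (3 u v i j)
  show ?case
  proof (cases "i = Suc j")
    case True then show ?thesis by simp
  next
    case False
    with "3.prems" have j: "Suc (Suc j) \<le> i" by simp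
    have e1: "FF u v i (Suc j) = FF u v (Suc (Suc j)) (Suc j)" using "3.IH"(1) j by simp
    have e2: "FF u v (Suc i) j = FF u v (Suc j) j" using "3.IH"(2) j by simp
    have e3: "FF u v i j = FF u v (Suc j) j" using "3.IH"(3) j by simp
    have m: "FF u v (Suc j) j \<le> FF u v (Suc (Suc j)) (Suc j)"
      using FF_mono1[of u v "Suc j" "Suc j"] FF_mono2[of u v "Suc j" "j"] by linarith
    show ?thesis using e1 e2 e3 m j by (simp add: FF3[of u v i j])
  qed
qed

lemma FF_append: "i \<le> length u \<Longrightarrow> j \<le> length v \<Longrightarrow> FF (u@x) (v@y) i j = FF u v i j"
  by (induction u v i j rule: FF.induct) (auto simp: nth_append FF3)

type_synonym state = "bool \<times> bool \<times> bool \<times> bool"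

definition XX :: "bool list \<Rightarrow> bool list \<Rightarrow> nat" where
  "XX u v = FF u v (length u) (length u)"

definition st :: "bool list \<Rightarrow> bool list \<Rightarrow> state" where
  "st u v = (FF u v (length u) (length u - 1) < XX u v, FF u v (length u - 1) (length u) < XX u v, last u, last v)"

definition Inc :: "state \<Rightarrow> bool \<Rightarrow> bool \<Rightarrow> nat" where
  "Inc s a b = (case s of (dy, dz, lu, lv) \<Rightarrow>
     if (\<not> dy \<and> a = lv) \<or> (\<not> dz \<and> lu = b) \<or> a = b then 1 else 0)"

definition Tr :: "state \<Rightarrow> bool \<Rightarrow> bool \<Rightarrow> state" where
  "Tr s a b = (case s of (dy, dz, lu, lv) \<Rightarrow>
     ((\<not> (\<not> dy \<and> a = lv)) \<and> ((\<not> dz \<and> lu = b) \<or> a = b),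
      (\<not> (\<not> dz \<and> lu = b)) \<and> ((\<not> dy \<and> a = lv) \<or> a = b), a, b))"

lemma step_arith:
  fixes x y z :: nat and p q e :: bool
  assumes "y \<le> x" "x \<le> y + 1" "z \<le> x" "x \<le> z + 1"
  shows "max (max (max (max z x) (z + (if q then 1 else 0))) (max (max x y) (y + (if p then 1 else 0)))) (x + (if e then 1 else 0)) = x + (if (\<not> y < x \<and> p) \<or> (\<not> z < x \<and> q) \<or> e then 1 else 0)
    \<and> (max (max x y) (y + (if p then 1 else 0)) < max (max (max (max z x) (z + (if q then 1 else 0))) (max (max x y) (y + (if p then 1 else 0)))) (x + (if e then 1 else 0)) \<longleftrightarrow> \<not> (\<not> y < x \<and> p) \<and> ((\<not> z < x \<and> q) \<or> e))
    \<and> (max (max z x) (z + (if q then 1 else 0)) < max (max (max (max z x) (z + (if q then 1 else 0))) (max (max x y) (y + (if p then 1 else 0)))) (x + (if e then 1 else 0)) \<longleftrightarrow> \<not> (\<not> z < x \<and> q) \<and> ((\<not> y < x \<and> p) \<or> e))"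
proof -
  have 1: "max (max (max (max z x) (z + (if q then 1 else 0))) (max (max x y) (y + (if p then 1 else 0)))) (x + (if e then 1 else 0)) = x + (if (\<not> y < x \<and> p) \<or> (\<not> z < x \<and> q) \<or> e then 1 else 0)"
    using assms(1-4) by (cases p; cases q; cases e) (simp_all add: max_def)
  have 2: "max (max x y) (y + (if p then 1 else 0)) = x + (if \<not> y < x \<and> p then 1 else 0)"
    using assms(1-4) by (cases p) (simp_all add: max_def)
  have 3: "max (max z x) (z + (if q then 1 else 0)) = x + (if \<not> z < x \<and> q then 1 else 0)"
    using assms(1-4) by (cases q) (simp_all add: max_def)
  show ?thesis unfolding 1 2 3 by auto
qed

lemma step:
  assumes "length u = Suc k" "length v = Suc k"
  shows "XX (u@[a]) (v@[b]) = XX u v + Inc (st u v) a b \<and> st (u@[a]) (v@[b]) = Tr (st u v) a b"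
proof -
  define n where "n = Suc k"
  define u' where "u' = u@[a]"
  define v' where "v' = v@[b]"
  define x where "x = FF u v n n"
  define y where "y = FF u v n k"
  define z where "z = FF u v k n"
  have lu: "length u = n" "length v = n" using assms n_def by auto
  have pre: "FF u' v' i j = FF u v i j" if "i \<le> n" "j \<le> n" for i j
    using FF_append[of i u j v "[a]" "[b]"] that lu u'_def v'_def by simp
  have yx: "y \<le> x" "x \<le> y + 1" unfolding x_def y_def n_def
    using FF_mono2[of u v "Suc k" k] FF_lip2[of u v "Suc k" k] by auto
  have zx: "z \<le> x" "x \<le> z + 1" unfolding x_def z_def n_def
    using FF_mono1[of u v k "Suc k"] FF_lip1[of u v k "Suc k"] by auto
  have lastu: "last u = u!k" using assms(1) last_conv_nth[of u] by (metis diff_Suc_1 list.size(3) nat.simps(3))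
  have lastv: "last v = v!k" using assms(2) last_conv_nth[of v] by (metis diff_Suc_1 list.size(3) nat.simps(3))
  have ua: "u'!n = a" "v'!n = b" "u'!k = last u" "v'!k = last v"
    using lu assms lastu lastv unfolding u'_def v'_def n_def by (simp_all add: nth_append)
  have b2: "FF u' v' (Suc n) k = y" using FF_band2[of k "Suc n" u' v'] pre[of n k] y_def n_def by simp
  have b1: "FF u' v' k (Suc n) = z" using FF_band1[of k "Suc n" u' v'] pre[of k n] z_def n_def by simp
  have y': "FF u' v' (Suc n) n = max (max x y) (y + (if a = last v then 1 else 0))"
    unfolding n_def using b2 ua pre[of n n] pre[of n k] x_def y_def n_def
    by (simp add: FF3[of u' v' "Suc k" k])
  have z': "FF u' v' n (Suc n) = max (max z x) (z + (if last u = b then 1 else 0))"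
    unfolding n_def using b1 ua pre[of n n] pre[of k n] x_def z_def n_def
    by (simp add: FF3[of u' v' k "Suc k"])
  have x': "FF u' v' (Suc n) (Suc n) = max (max (FF u' v' n (Suc n)) (FF u' v' (Suc n) n)) (x + (if a = b then 1 else 0))"
    using ua pre[of n n] x_def by (simp add: FF3[of u' v' n n])
  have XXu: "XX u v = x" unfolding XX_def x_def using lu by simp
  have XXu': "XX u' v' = FF u' v' (Suc n) (Suc n)" unfolding XX_def u'_def using lu by simp
  have stu: "st u v = (y < x, z < x, last u, last v)" unfolding st_def XXu using lu x_def y_def z_def n_def by simp
  have stu': "st u' v' = (FF u' v' (Suc n) n < FF u' v' (Suc n) (Suc n), FF u' v' n (Suc n) < FF u' v' (Suc n) (Suc n), a, b)"
    unfolding st_def XXu' using lu u'_def v'_def by (simp add: XX_def)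
  note sa = step_arith[OF yx zx, where p = "a = last v" and q = "last u = b" and e = "a = b"]
  have A: "FF u' v' (Suc n) (Suc n) = x + Inc (y < x, z < x, last u, last v) a b"
    unfolding x' y' z' Inc_def prod.case by (rule conjunct1[OF sa])
  have B: "st u' v' = Tr (y < x, z < x, last u, last v) a b"
    unfolding stu' x' y' z' Tr_def prod.case prod.inject using conjunct2[OF sa]
    by (intro conjI refl) blast+
  show ?thesis
    unfolding u'_def[symmetric] v'_def[symmetric] XXu XXu' stu using A B by (rule conjI)
qed



definition LL :: "nat \<Rightarrow> bool list set" where "LL n = {xs. length xs = n}"

lemma finite_LL: "finite (LL n)"
proof -
  have "LL n = {xs. set xs \<subseteq> UNIV \<and> length xs = n}" unfolding LL_def by simp
  then show ?thesis using finite_lists_length_eq[of "UNIV :: bool set" n] by simp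
qed

lemma LL_Suc: "LL (Suc n) = (\<lambda>xs. xs @ [True]) ` LL n \<union> (\<lambda>xs. xs @ [False]) ` LL n"
proof (intro set_eqI iffI)
  fix xs assume "xs \<in> LL (Suc n)"
  then have l: "length xs = Suc n" by (simp add: LL_def)
  then have ne: "xs \<noteq> []" by auto
  have b: "butlast xs \<in> LL n" using l by (simp add: LL_def)
  show "xs \<in> (\<lambda>xs. xs @ [True]) ` LL n \<union> (\<lambda>xs. xs @ [False]) ` LL n"
  proof (cases "last xs")
    case True
    then have "xs = (\<lambda>xs. xs @ [True]) (butlast xs)" using append_butlast_last_id[OF ne] by simp
    then show ?thesis using b by blast
  next
    case False
    then have "xs = (\<lambda>xs. xs @ [False]) (butlast xs)" using append_butlast_last_id[OF ne] by simp
    then show ?thesis using b by blast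
  qed
next
  fix xs assume "xs \<in> (\<lambda>xs. xs @ [True]) ` LL n \<union> (\<lambda>xs. xs @ [False]) ` LL n"
  then show "xs \<in> LL (Suc n)" by (auto simp: LL_def)
qed

lemma sum_LL_Suc: "(\<Sum>xs\<in>LL (Suc n). f xs) = (\<Sum>xs\<in>LL n. f (xs @ [True]) + f (xs @ [False]))"
proof -
  have d: "(\<lambda>xs. xs @ [True]) ` LL n \<inter> (\<lambda>xs. xs @ [False]) ` LL n = {}" by auto
  have "(\<Sum>xs\<in>LL (Suc n). f xs) = (\<Sum>xs\<in>(\<lambda>xs. xs @ [True]) ` LL n. f xs) + (\<Sum>xs\<in>(\<lambda>xs. xs @ [False]) ` LL n. f xs)"
    unfolding LL_Suc by (rule sum.union_disjoint) (use finite_LL d in auto)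
  also have "\<dots> = (\<Sum>xs\<in>LL n. f (xs @ [True])) + (\<Sum>xs\<in>LL n. f (xs @ [False]))"
    by (simp add: sum.reindex inj_on_def)
  finally show ?thesis by (simp add: sum.distrib)
qed

definition PP :: "nat \<Rightarrow> real" where "PP n = Re ((1 + \<i>) ^ n)"
definition QQ :: "nat \<Rightarrow> real" where "QQ n = Im ((1 + \<i>) ^ n)"

lemma PP_0: "PP 0 = 1" and QQ_0: "QQ 0 = 0" by (simp_all add: PP_def QQ_def)
lemma PP_Suc: "PP (Suc n) = PP n - QQ n" and QQ_Suc: "QQ (Suc n) = PP n + QQ n"
  by (simp_all add: PP_def QQ_def)

definition CC :: "nat \<Rightarrow> real" where "CC k = 4^k * (7/10 * k + 1/50) - PP k / 50 + 7 * QQ k / 50"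
definition EE :: "nat \<Rightarrow> real" where "EE k = (3 * 4^k - 3 * PP k + QQ k) / 10"
definition GG :: "nat \<Rightarrow> real" where "GG k = (4^k - PP k - 3 * QQ k) / 10"

lemma CC_0: "CC 0 = 0" and EE_0: "EE 0 = 0" and GG_0: "GG 0 = 0"
  by (simp_all add: CC_def EE_def GG_def PP_0 QQ_0)

lemma CC_Suc: "CC (Suc k) = 4 * CC k - EE k + GG k + 3 * 4^k"
  by (simp add: CC_def EE_def GG_def PP_Suc QQ_Suc field_simps)
lemma EE_Suc: "EE (Suc k) = EE k - GG k + 4^k"
  by (simp add: EE_def GG_def PP_Suc QQ_Suc field_simps)
lemma GG_Suc: "GG (Suc k) = EE k + GG k"
  by (simp add: EE_def GG_def PP_Suc QQ_Suc field_simps)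

definition phi :: "state \<Rightarrow> real" where
  "phi s = (case s of (dy, dz, lu, lv) \<Rightarrow> if \<not> dy \<and> \<not> dz \<and> lu = lv then 1 else if dy \<and> dz then -1 else 0)"
definition psi :: "state \<Rightarrow> real" where
  "psi s = (case s of (dy, dz, lu, lv) \<Rightarrow> if \<not> dy \<and> \<not> dz \<and> lu \<noteq> lv then 1 else 0)"

definition HS :: "nat \<Rightarrow> state \<Rightarrow> real \<Rightarrow> real" where
  "HS k s X = CC k + EE k * phi s + GG k * psi s + 4^k * X"

lemma pointwise:
  fixes X :: real
  shows "HS k (Tr s True True) (X + real (Inc s True True)) + HS k (Tr s True False) (X + real (Inc s True False))
   + HS k (Tr s False True) (X + real (Inc s False True)) + HS k (Tr s False False) (X + real (Inc s False False))
   = HS (Suc k) s X"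
proof -
  obtain dy dz lu lv where s: "s = (dy, dz, lu, lv)" by (cases s) auto
  show ?thesis unfolding s HS_def CC_Suc EE_Suc GG_Suc
    by (cases dy; cases dz; cases lu; cases lv) (simp_all add: Tr_def Inc_def phi_def psi_def ring_distribs)
qed

definition HH :: "nat \<Rightarrow> bool list \<Rightarrow> bool list \<Rightarrow> real" where
  "HH k u v = HS k (st u v) (real (XX u v))"

lemma HH_step:
  assumes "u \<in> LL (Suc m)" "v \<in> LL (Suc m)"
  shows "HH k (u @ [a]) (v @ [b]) = HS k (Tr (st u v) a b) (real (XX u v) + Inc (st u v) a b)"
proof -
  have l: "length u = Suc m" "length v = Suc m" using assms by (auto simp: LL_def)
  show ?thesis unfolding HH_def using step[OF l, of a b] by simp
qed

lemma HH_split: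
  "(\<Sum>u\<in>LL (Suc (Suc m)). \<Sum>v\<in>LL (Suc (Suc m)). HH k u v) = (\<Sum>u\<in>LL (Suc m). \<Sum>v\<in>LL (Suc m). HH (Suc k) u v)"
proof -
  have "(\<Sum>u\<in>LL (Suc (Suc m)). \<Sum>v\<in>LL (Suc (Suc m)). HH k u v)
     = (\<Sum>u\<in>LL (Suc m). \<Sum>v\<in>LL (Suc m).
          HH k (u@[True]) (v@[True]) + HH k (u@[True]) (v@[False]) + HH k (u@[False]) (v@[True]) + HH k (u@[False]) (v@[False]))"
    by (simp only: sum_LL_Suc sum.distrib add.assoc)
  also have "\<dots> = (\<Sum>u\<in>LL (Suc m). \<Sum>v\<in>LL (Suc m). HH (Suc k) u v)"
  proof (intro sum.cong refl)
    fix u v assume uv: "u \<in> LL (Suc m)" "v \<in> LL (Suc m)"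
    show "HH k (u@[True]) (v@[True]) + HH k (u@[True]) (v@[False]) + HH k (u@[False]) (v@[True]) + HH k (u@[False]) (v@[False])
       = HH (Suc k) u v"
      unfolding HH_step[OF uv] using pointwise[of k "st u v" "real (XX u v)"] by (simp add: HH_def)
  qed
  finally show ?thesis .
qed

lemma main_ind:
  "(\<Sum>u\<in>LL (Suc m + k). \<Sum>v\<in>LL (Suc m + k). real (XX u v)) = (\<Sum>u\<in>LL (Suc m). \<Sum>v\<in>LL (Suc m). HH k u v)"
proof (induction k arbitrary: m)
  case 0 then show ?case by (simp add: HH_def HS_def CC_0 EE_0 GG_0)
next
  case (Suc k)
  have "Suc m + Suc k = Suc (Suc m) + k" by simp
  then show ?case using Suc.IH[of "Suc m"] HH_split[where m=m and k=k] by simp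
qed



lemma LL_0: "LL 0 = {[]}" by (auto simp: LL_def)
lemma LL_1: "LL (Suc 0) = {[True],[False]}" using LL_Suc[of 0] by (auto simp: LL_0)

lemma EL2_sum: "EL2 n 1 = (\<Sum>u\<in>LL n. \<Sum>v\<in>LL n. real (XX u v)) / 4^n"
proof -
  have "(\<Sum>u\<in>LL n. \<Sum>v\<in>LL n. real (LCS_reach 1 u v)) = (\<Sum>u\<in>LL n. \<Sum>v\<in>LL n. real (XX u v))"
  proof (intro sum.cong refl)
    fix u v assume "u \<in> LL n" "v \<in> LL n"
    then have l: "length u = n" "length v = n" by (auto simp: LL_def)
    show "real (LCS_reach 1 u v) = real (XX u v)" using LCS_FF[OF l] l by (simp add: XX_def)
  qed
  moreover have "(2::real)^(2*n) = 4^n" by (simp add: power_mult)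
  ultimately show ?thesis unfolding EL2_def LL_def by simp
qed

lemma HH1: "HH k [a] [b] = (if a = b then CC k - EE k + 4^k else CC k + GG k)"
  by (cases a; cases b) (simp_all add: HH_def HS_def st_def XX_def FF3 phi_def psi_def)

lemma EL2_closed: "EL2 n 1 = 7/10 * real n - 7/25 + (7 * PP n + QQ n) / (25 * 4^n)"
proof (cases n)
  case 0 then show ?thesis unfolding 0 EL2_sum by (simp add: LL_0 XX_def PP_0 QQ_0)
next
  case (Suc k)
  have "(\<Sum>u\<in>LL n. \<Sum>v\<in>LL n. real (XX u v)) = (\<Sum>u\<in>LL (Suc 0). \<Sum>v\<in>LL (Suc 0). HH k u v)"
    using main_ind[where m=0 and k=k] Suc by simp
  also have "\<dots> = 4 * CC k - 2 * EE k + 2 * GG k + 2 * 4^k" by (simp add: LL_1 HH1)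
  finally show ?thesis unfolding EL2_sum Suc
    by (simp add: CC_def EE_def GG_def PP_Suc QQ_Suc field_simps)
qed

lemma cmod_1i: "cmod (1 + \<i>) = sqrt 2" by (simp add: cmod_def)

lemma PP_bound: "\<bar>PP n\<bar> \<le> sqrt 2 ^ n"
  unfolding PP_def using abs_Re_le_cmod[of "(1+\<i>)^n"] by (simp add: norm_power cmod_1i)
lemma QQ_bound: "\<bar>QQ n\<bar> \<le> sqrt 2 ^ n"
  unfolding QQ_def using abs_Im_le_cmod[of "(1+\<i>)^n"] by (simp add: norm_power cmod_1i)

definition RR :: "nat \<Rightarrow> real" where "RR n = (7 * PP n + QQ n) / (25 * 4^n)"

lemma sqrt2_pow: "sqrt 2 ^ n / 4 ^ n = 2 powr (- 3 * real n / 2)"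
proof -
  have a: "sqrt 2 ^ n = 2 powr (real n * (1/2))"
    using powr_power[of "2::real" "1/2" n] powr_half_sqrt[of 2] by simp
  have b: "(4::real) ^ n = 2 powr (real (2 * n))"
    by (subst powr_realpow) (simp_all add: power_mult)
  have "sqrt 2 ^ n / 4 ^ n = 2 powr (real n * (1/2) - real (2 * n))"
    unfolding a b by (rule powr_diff[symmetric])
  also have "real n * (1/2) - real (2 * n) = - 3 * real n / 2" by simp
  finally show ?thesis .
qed

lemma RR_bound: "\<bar>RR n\<bar> \<le> 8/25 * 2 powr (- 3 * real n / 2)"
proof -
  have "\<bar>7 * PP n + QQ n\<bar> \<le> 8 * sqrt 2 ^ n" using PP_bound[of n] QQ_bound[of n] by linarith
  then have "\<bar>RR n\<bar> \<le> 8 * sqrt 2 ^ n / (25 * 4^n)" unfolding RR_def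
    by (simp add: abs_divide divide_right_mono)
  also have "\<dots> = 8/25 * (sqrt 2 ^ n / 4 ^ n)" by simp
  finally show ?thesis unfolding sqrt2_pow .
qed

lemma RR_sums:
  fixes a :: real assumes a: "\<bar>a\<bar> < 1"
  shows "(\<lambda>n. RR n * a^n) sums (2*(28-6*a)/(25*(a^2-4*a+8)))"
proof -
  define w where "w = (1 + \<i>) * complex_of_real (a/4)"
  have s2: "sqrt 2 < 2"
    by (metis real_sqrt_four real_sqrt_less_iff numeral_less_iff semiring_norm(76) semiring_norm(78))
  have "norm w = sqrt 2 * \<bar>a\<bar> / 4" by (simp add: w_def norm_mult cmod_1i)
  also have "\<dots> < 1"
  proof -
    have "sqrt 2 * \<bar>a\<bar> \<le> sqrt 2 * 1" using a by (intro mult_left_mono) auto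
    then show ?thesis using s2 by linarith
  qed
  finally have nw: "norm w < 1" .
  have "(\<lambda>n. Re ((7 - \<i>) / 25 * w^n)) sums Re ((7 - \<i>) / 25 * (1 / (1 - w)))"
    by (intro sums_Re sums_mult geometric_sums nw)
  moreover have "Re ((7 - \<i>) / 25 * w^n) = RR n * a^n" for n
  proof -
    have wn: "w^n = (1 + \<i>)^n * complex_of_real ((a/4)^n)" by (simp only: w_def power_mult_distrib of_real_power)
    have c: "Re ((7 - \<i>) / 25 * w^n) = (7 * Re (w^n) + Im (w^n)) / 25" by simp
    have r: "Re (w^n) = PP n * (a/4)^n" "Im (w^n) = QQ n * (a/4)^n" unfolding wn PP_def QQ_def by simp_all
    show ?thesis unfolding c r RR_def by (simp add: power_divide field_simps)
  qed
  moreover have "Re ((7 - \<i>) / 25 * (1 / (1 - w))) = 2*(28-6*a)/(25*(a^2-4*a+8))"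
  proof -
    have "a^2 - 4*a + 8 = (a-2)^2 + 4" by (simp add: power2_eq_square algebra_simps)
    then have pos: "a^2 - 4*a + 8 > 0" by (metis add_pos_nonneg zero_less_numeral zero_le_power2 add.commute)
    show ?thesis using pos
      by (simp add: w_def Re_divide field_simps power2_eq_square)
  qed
  ultimately show ?thesis by simp
qed



lemma final_alg:
  fixes a :: real
  assumes pos: "a^2 - 4*a + 8 \<noteq> 0" and a1: "1 - a \<noteq> 0"
  shows "7/10 * (1/(1-a)^2) - 49/50 * (1/(1-a)) + 2*(28-6*a)/(25*(a^2-4*a+8))
      = a * (a^2 - 2*a + 8) / (2 * (a^2 - 4*a + 8) * (a - 1)^2)"
proof -
  define d where "d = a^2 - 4*a + 8"
  define e where "e = 1 - a"
  have e2: "(a - 1)^2 = e^2" unfolding e_def by (simp add: power2_commute)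
  have nz: "d \<noteq> 0" "e \<noteq> 0" using pos a1 d_def e_def by auto
  have L: "7/10 * (1/e^2) - 49/50 * (1/e) + 2*(28-6*a)/(25*d) = (35*d - 49*e*d + 4*(28-6*a)*e^2)/(50*d*e^2)"
    using nz by (simp add: field_simps power2_eq_square)
  have R: "a * (a^2 - 2*a + 8) / (2 * d * e^2) = 25*(a*(a^2-2*a+8))/(50*d*e^2)"
    using nz by (simp add: field_simps power2_eq_square)
  have N: "35*d - 49*e*d + 4*(28-6*a)*e^2 = 25*(a*(a^2-2*a+8))"
    unfolding d_def e_def by (simp add: power2_eq_square algebra_simps)
  show ?thesis unfolding d_def[symmetric] e_def[symmetric] e2 L R N ..
qed

theorem mainTheorem4:
  shows "(\<forall>a::real. \<bar>a\<bar> < 1 \<longrightarrow>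
           (\<lambda>n. EL2 n 1 * a ^ n) sums
             (a * (a^2 - 2*a + 8) / (2 * (a^2 - 4*a + 8) * (a - 1)^2)))
       \<and> (\<lambda>n. EL2 n 1 - (7/10 * real n - 7/25)) \<in> O(\<lambda>n. 2 powr (- 3 * real n / 2))
       \<and> (\<lambda>n. EL2 n 1 / real n) \<longlonglongrightarrow> 7/10"
proof (intro conjI allI impI)
  fix a :: real assume a: "\<bar>a\<bar> < 1"
  have s1: "(\<lambda>n. of_nat (Suc n) * a^n) sums (1/(1-a)^2)" using geometric_deriv_sums[of a] a by simp
  have s2: "(\<lambda>n. a^n) sums (1/(1-a))" using geometric_sums[of a] a by simp
  have "(\<lambda>n. 7/10 * (of_nat (Suc n) * a^n) - 49/50 * a^n + RR n * a^n) sums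
      (7/10 * (1/(1-a)^2) - 49/50 * (1/(1-a)) + 2*(28-6*a)/(25*(a^2-4*a+8)))"
    by (intro sums_add sums_diff sums_mult s1 s2 RR_sums a)
  moreover have "(\<lambda>n. EL2 n 1 * a^n) = (\<lambda>n. 7/10 * (of_nat (Suc n) * a^n) - 49/50 * a^n + RR n * a^n)"
    unfolding EL2_closed by (rule ext) (simp add: RR_def algebra_simps)
  moreover have "7/10 * (1/(1-a)^2) - 49/50 * (1/(1-a)) + 2*(28-6*a)/(25*(a^2-4*a+8))
      = a * (a^2 - 2*a + 8) / (2 * (a^2 - 4*a + 8) * (a - 1)^2)"
  proof -
    have "a^2 - 4*a + 8 = (a-2)^2 + 4" by (simp add: power2_eq_square algebra_simps)
    then have pos: "a^2 - 4*a + 8 \<noteq> 0" by (metis add_pos_nonneg zero_less_numeral zero_le_power2 add.commute less_irrefl)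
    have a1: "1 - a \<noteq> 0" using a by auto
    show ?thesis by (rule final_alg[OF pos a1])
  qed
  ultimately show "(\<lambda>n. EL2 n 1 * a ^ n) sums (a * (a^2 - 2*a + 8) / (2 * (a^2 - 4*a + 8) * (a - 1)^2))"
    by simp
next
  have eq: "(\<lambda>n. EL2 n 1 - (7/10 * real n - 7/25)) = RR" unfolding EL2_closed by (rule ext) (simp add: RR_def)
  have "RR \<in> O(\<lambda>n. 2 powr (- 3 * real n / 2))"
  proof (rule bigoI)
    show "\<forall>\<^sub>F n in at_top. norm (RR n) \<le> 8/25 * norm (2 powr (- 3 * real n / 2))"
    proof (intro always_eventually allI)
      fix n :: nat
      have h1: "norm (RR n) = \<bar>RR n\<bar>" by simp
      have h2: "norm ((2::real) powr (- 3 * real n / 2)) = 2 powr (- 3 * real n / 2)" by simp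
      show "norm (RR n) \<le> 8/25 * norm ((2::real) powr (- 3 * real n / 2))"
        unfolding h1 h2 by (rule RR_bound)
    qed
  qed
  then show "(\<lambda>n. EL2 n 1 - (7/10 * real n - 7/25)) \<in> O(\<lambda>n. 2 powr (- 3 * real n / 2))"
    unfolding eq .
next
  have q: "norm (sqrt 2 / 4 :: real) < 1"
  proof -
    have "sqrt 2 < 2"
      by (metis real_sqrt_four real_sqrt_less_iff numeral_less_iff semiring_norm(76) semiring_norm(78))
    then show ?thesis by simp
  qed
  have R0: "RR \<longlonglongrightarrow> 0"
  proof (rule Lim_null_comparison)
    show "\<forall>\<^sub>F n in sequentially. norm (RR n) \<le> 8/25 * (sqrt 2 / 4)^n"
    proof (intro always_eventually allI)
      fix n :: nat
      have h1: "norm (RR n) = \<bar>RR n\<bar>" by simp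
      have h2: "(sqrt 2 / 4) ^ n = 2 powr (- 3 * real n / 2)" unfolding sqrt2_pow[symmetric] power_divide ..
      show "norm (RR n) \<le> 8/25 * (sqrt 2 / 4)^n"
        unfolding h1 h2 by (rule RR_bound)
    qed
    show "(\<lambda>n. 8/25 * (sqrt 2 / 4)^n) \<longlonglongrightarrow> 0"
      using tendsto_mult_right_zero[OF LIMSEQ_power_zero[OF q]] by simp
  qed
  have lim: "(\<lambda>n. 7/10 + (RR n - 7/25) * (1 / real n)) \<longlonglongrightarrow> 7/10 + (0 - 7/25) * 0"
    by (intro tendsto_intros R0 lim_1_over_n)
  have ev: "\<forall>\<^sub>F n in sequentially. 7/10 + (RR n - 7/25) * (1 / real n) = EL2 n 1 / real n"
    unfolding eventually_sequentially EL2_closed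
    by (intro exI[of _ 1] allI impI) (simp add: RR_def field_simps)
  show "(\<lambda>n. EL2 n 1 / real n) \<longlonglongrightarrow> 7/10"
    using Lim_transform_eventually[OF lim ev] by simp
qed

end
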